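(* Let $C=(v_0v_1\cdots v_{2i-1})$ be a convex cycle of length $2i\ge 4$ in a mirror graph $G$. Then for every edge $ab$ with $ab\,\Theta\,v_0v_1$, either both $a,b$ lie in $W_{v_2v_1}\cap W_{v_3v_2}\cap\cdots\cap W_{v_iv_{i-1}}$, or both $a,b$ lie in the intersection of the complements $\bigcap_{j=2}^{i}\bigl(V(G)\setminus W_{v_jv_{j-1}}\bigr)$.
   Context: A mirror graph is a finite connected simple graph $G$ admitting a partition $\{E_1,\dots,E_k\}$ of its edges such that for every $i$ there is an automorphism $\alpha_i$ swapping the endpoints of every edge of $E_i$, with $G-E_i$ having exactly two components that $\alpha_i$ maps isomorphically onto each other. Mirror graphs are partial cubes; $\Theta$ is the relation on edges $ab\,\Theta\,xy$ iff $d(a,x)+d(b,y)\neq d(a,y)+d(b,x)$ ($d$ the shortest-path distance), an equivalence relation on edges of a partial cube. For an edge $uv$, $W_{uv}=\{w\in V(G): d(u,w)<d(v,w)\}$. A cycle is convex if every shortest path of $G$ between two of its vertices lies on it. *)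

theory Defs
  imports Main
begin

definition simple_graph :: "'a set \<Rightarrow> ('a \<Rightarrow> 'a \<Rightarrow> bool) \<Rightarrow> bool" where
  "simple_graph V E \<longleftrightarrow> finite V \<and> (\<forall>u v. E u v \<longrightarrow> u \<in> V \<and> v \<in> V)
     \<and> (\<forall>u v. E u v \<longrightarrow> E v u) \<and> (\<forall>u. \<not> E u u)"

definition walk :: "'a set \<Rightarrow> ('a \<Rightarrow> 'a \<Rightarrow> bool) \<Rightarrow> 'a list \<Rightarrow> bool" where
  "walk V E xs \<longleftrightarrow> xs \<noteq> [] \<and> set xs \<subseteq> V \<and> (\<forall>k < length xs - 1. E (xs ! k) (xs ! Suc k))"

definition connected_graph :: "'a set \<Rightarrow> ('a \<Rightarrow> 'a \<Rightarrow> bool) \<Rightarrow> bool" where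
  "connected_graph V E \<longleftrightarrow> V \<noteq> {} \<and>
     (\<forall>u\<in>V. \<forall>w\<in>V. \<exists>xs. walk V E xs \<and> hd xs = u \<and> last xs = w)"

definition gdist :: "'a set \<Rightarrow> ('a \<Rightarrow> 'a \<Rightarrow> bool) \<Rightarrow> 'a \<Rightarrow> 'a \<Rightarrow> nat" where
  "gdist V E u w = (LEAST n. \<exists>xs. walk V E xs \<and> hd xs = u \<and> last xs = w \<and> length xs = Suc n)"

definition edges :: "('a \<Rightarrow> 'a \<Rightarrow> bool) \<Rightarrow> 'a set set" where
  "edges E = {{u, v} | u v. E u v}"

definition components :: "'a set \<Rightarrow> ('a \<Rightarrow> 'a \<Rightarrow> bool) \<Rightarrow> 'a set set" where
  "components V E = {{w \<in> V. \<exists>xs. walk V E xs \<and> hd xs = u \<and> last xs = w} | u. u \<in> V}"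

definition automorphism :: "'a set \<Rightarrow> ('a \<Rightarrow> 'a \<Rightarrow> bool) \<Rightarrow> ('a \<Rightarrow> 'a) \<Rightarrow> bool" where
  "automorphism V E \<alpha> \<longleftrightarrow> bij_betw \<alpha> V V \<and> (\<forall>u\<in>V. \<forall>v\<in>V. E u v \<longleftrightarrow> E (\<alpha> u) (\<alpha> v))"

definition delete_edges :: "('a \<Rightarrow> 'a \<Rightarrow> bool) \<Rightarrow> 'a set set \<Rightarrow> 'a \<Rightarrow> 'a \<Rightarrow> bool" where
  "delete_edges E F = (\<lambda>u v. E u v \<and> {u, v} \<notin> F)"

definition mirror_graph :: "'a set \<Rightarrow> ('a \<Rightarrow> 'a \<Rightarrow> bool) \<Rightarrow> bool" where
  "mirror_graph V E \<longleftrightarrow> simple_graph V E \<and> connected_graph V E \<and>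
     (\<exists>P. \<Union>P = edges E \<and> {} \<notin> P \<and> (\<forall>F1\<in>P. \<forall>F2\<in>P. F1 \<noteq> F2 \<longrightarrow> F1 \<inter> F2 = {}) \<and>
       (\<forall>F\<in>P. \<exists>\<alpha>. automorphism V E \<alpha> \<and>
          (\<forall>u v. E u v \<and> {u, v} \<in> F \<longrightarrow> \<alpha> u = v \<and> \<alpha> v = u) \<and>
          (\<exists>A B. components V (delete_edges E F) = {A, B} \<and> A \<noteq> B \<and>
             \<alpha> ` A = B \<and> \<alpha> ` B = A \<and>
             (\<forall>u\<in>A. \<forall>w\<in>A. delete_edges E F u w \<longleftrightarrow> delete_edges E F (\<alpha> u) (\<alpha> w)) \<and>
             (\<forall>u\<in>B. \<forall>w\<in>B. delete_edges E F u w \<longleftrightarrow> delete_edges E F (\<alpha> u) (\<alpha> w)))))"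

definition Theta :: "'a set \<Rightarrow> ('a \<Rightarrow> 'a \<Rightarrow> bool) \<Rightarrow> 'a \<Rightarrow> 'a \<Rightarrow> 'a \<Rightarrow> 'a \<Rightarrow> bool" where
  "Theta V E a b x y \<longleftrightarrow> gdist V E a x + gdist V E b y \<noteq> gdist V E a y + gdist V E b x"

definition W :: "'a set \<Rightarrow> ('a \<Rightarrow> 'a \<Rightarrow> bool) \<Rightarrow> 'a \<Rightarrow> 'a \<Rightarrow> 'a set" where
  "W V E u v = {w \<in> V. gdist V E u w < gdist V E v w}"

definition is_cycle :: "'a set \<Rightarrow> ('a \<Rightarrow> 'a \<Rightarrow> bool) \<Rightarrow> (nat \<Rightarrow> 'a) \<Rightarrow> nat \<Rightarrow> bool" where
  "is_cycle V E v n \<longleftrightarrow> n \<ge> 3 \<and> inj_on v {..<n} \<and> v ` {..<n} \<subseteq> V \<and>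
     (\<forall>k<n. E (v k) (v (Suc k mod n)))"

definition cycle_edges :: "(nat \<Rightarrow> 'a) \<Rightarrow> nat \<Rightarrow> 'a set set" where
  "cycle_edges v n = {{v k, v (Suc k mod n)} | k. k < n}"

definition convex_cycle :: "'a set \<Rightarrow> ('a \<Rightarrow> 'a \<Rightarrow> bool) \<Rightarrow> (nat \<Rightarrow> 'a) \<Rightarrow> nat \<Rightarrow> bool" where
  "convex_cycle V E v n \<longleftrightarrow> is_cycle V E v n \<and>
     (\<forall>xs. walk V E xs \<and> hd xs \<in> v ` {..<n} \<and> last xs \<in> v ` {..<n} \<and>
           length xs = Suc (gdist V E (hd xs) (last xs)) \<longrightarrow>
        set xs \<subseteq> v ` {..<n} \<and> (\<forall>k < length xs - 1. {xs ! k, xs ! Suc k} \<in> cycle_edges v n))"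

end

theory Submission
  imports Defs
begin


lemma walk_single: "x \<in> V \<Longrightarrow> walk V R [x]"
  by (simp add: walk_def)

lemma walk_Cons: "walk V R (x # y # xs) \<longleftrightarrow> x \<in> V \<and> R x y \<and> walk V R (y # xs)"
proof -
  have "(\<forall>k < length (x#y#xs) - 1. R ((x#y#xs) ! k) ((x#y#xs) ! Suc k)) \<longleftrightarrow>
        R x y \<and> (\<forall>k < length (y#xs) - 1. R ((y#xs) ! k) ((y#xs) ! Suc k))"
    apply (auto simp: less_Suc_eq_0_disj)
    done
  then show ?thesis by (auto simp: walk_def)
qed

lemma walk_Cons1: "walk V R (x # xs) \<Longrightarrow> x \<in> V"
  by (simp add: walk_def)

lemma walk_tl: "walk V R (x # y # xs) \<Longrightarrow> walk V R (y # xs)"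
  by (simp add: walk_Cons)

lemma walk_append:
  assumes "walk V R xs" "walk V R ys" "R (last xs) (hd ys)"
  shows "walk V R (xs @ ys)"
  using assms
proof (induction xs)
  case Nil then show ?case by (simp add: walk_def)
next
  case (Cons x xs)
  show ?case
  proof (cases xs)
    case Nil
    show ?thesis
    proof (cases ys)
      case Nil2: Nil
      then show ?thesis using Cons.prems \<open>xs = []\<close> by simp
    next
      case (Cons a list)
      then show ?thesis using Cons.prems \<open>xs = []\<close> by (simp add: walk_Cons walk_Cons1)
    qed
  next
    case (Cons y zs)
    with Cons.prems Cons.IH show ?thesis
      by (auto simp: walk_Cons)
  qed
qed

lemma walk_map:
  assumes "walk V R xs" "\<And>x. x \<in> V \<Longrightarrow> f x \<in> V'"
    "\<And>x y. x \<in> V \<Longrightarrow> y \<in> V \<Longrightarrow> R x y \<Longrightarrow> R' (f x) (f y)"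
  shows "walk V' R' (map f xs)"
  using assms unfolding walk_def
proof (auto)
  fix k assume "set xs \<subseteq> V" "\<forall>k<length xs - Suc 0. R (xs ! k) (xs ! Suc k)" "k < length xs - Suc 0"
  then have "k < length xs" "Suc k < length xs" by auto
  with \<open>set xs \<subseteq> V\<close> have "xs ! k \<in> V" "xs ! Suc k \<in> V" using nth_mem by blast+
  then show "R' (f (xs ! k)) (f (xs ! Suc k))" using assms(3) \<open>\<forall>k<length xs - Suc 0. R (xs ! k) (xs ! Suc k)\<close> \<open>k < length xs - Suc 0\<close> by blast
qed

lemma walk_rev:
  assumes "walk V R xs" "\<And>x y. R x y \<Longrightarrow> R y x"
  shows "walk V R (rev xs)"
  using assms(1)
proof (induction xs rule: induct_list012)
  case 1 then show ?case by (simp add: walk_def)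
next
  case (2 x) then show ?case by (simp add: walk_def)
next
  case (3 x y zs)
  have w: "walk V R (rev (y # zs))" using 3(2) walk_tl[OF 3(3)] by blast
  have "walk V R (rev (y#zs) @ [x])"
    by (rule walk_append[OF w walk_single]) (use 3 assms(2) in \<open>auto simp: walk_Cons\<close>)
  then show ?case by simp
qed

lemma walk_drop: "walk V R xs \<Longrightarrow> k < length xs \<Longrightarrow> walk V R (drop k xs)"
  unfolding walk_def
  by (auto simp: set_drop_subset[THEN subsetD] dest: in_set_dropD)

lemma walk_take: "walk V R xs \<Longrightarrow> 0 < k \<Longrightarrow> walk V R (take k xs)"
  unfolding walk_def
  by (auto dest: in_set_takeD)

lemma walk_mono: "walk V R xs \<Longrightarrow> (\<And>x y. R x y \<Longrightarrow> R' x y) \<Longrightarrow> walk V R' xs"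
  unfolding walk_def by auto

lemma walk_nth_V: "walk V R xs \<Longrightarrow> k < length xs \<Longrightarrow> xs ! k \<in> V"
  unfolding walk_def by auto



locale sgraph =
  fixes V :: "'a set" and E :: "'a \<Rightarrow> 'a \<Rightarrow> bool"
  assumes simple: "simple_graph V E" and conn: "connected_graph V E"
begin

abbreviation "d \<equiv> gdist V E"

lemma E_V: "E x y \<Longrightarrow> x \<in> V \<and> y \<in> V"
  using simple unfolding simple_graph_def by blast

lemma E_sym: "E x y \<Longrightarrow> E y x"
  using simple unfolding simple_graph_def by blast

lemma E_irrefl: "\<not> E x x"
  using simple unfolding simple_graph_def by blast

lemma finV: "finite V"
  using simple unfolding simple_graph_def by blast

lemma gdist_ex:
  assumes "u \<in> V" "w \<in> V"
  shows "\<exists>xs. walk V E xs \<and> hd xs = u \<and> last xs = w \<and> length xs = Suc (d u w)"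
proof -
  obtain xs where xs: "walk V E xs" "hd xs = u" "last xs = w"
    using conn assms unfolding connected_graph_def by blast
  then have "xs \<noteq> []" by (simp add: walk_def)
  then have "\<exists>n. \<exists>xs. walk V E xs \<and> hd xs = u \<and> last xs = w \<and> length xs = Suc n"
    using xs by (intro exI[of _ "length xs - 1"]) (auto intro!: exI[of _ xs])
  from LeastI_ex[OF this] show ?thesis unfolding gdist_def by blast
qed

lemma gdist_le:
  assumes "walk V E xs" "hd xs = u" "last xs = w"
  shows "d u w \<le> length xs - 1"
proof -
  have "xs \<noteq> []" using assms by (simp add: walk_def)
  then have "length xs = Suc (length xs - 1)" by simp
  then show ?thesis unfolding gdist_def using assms by (intro Least_le) blast
qed

lemma gdist_refl: "u \<in> V \<Longrightarrow> d u u = 0"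
  using gdist_le[of "[u]" u u] walk_single[of u V E] by simp

lemma gdist_sym: assumes "u \<in> V" "w \<in> V" shows "d u w = d w u"
proof -
  have le: "d x y \<le> d y x" if xy: "x \<in> V" "y \<in> V" for x y
  proof -
    obtain xs where xs: "walk V E xs" "hd xs = y" "last xs = x" "length xs = Suc (d y x)"
      using gdist_ex xy by blast
    have "walk V E (rev xs)" using walk_rev[OF xs(1)] E_sym by blast
    moreover have "xs \<noteq> []" using xs by (simp add: walk_def)
    ultimately have "d x y \<le> length (rev xs) - 1" using xs
      by (intro gdist_le) (auto simp: hd_rev last_rev)
    then show ?thesis using xs by simp
  qed
  show ?thesis using le[OF assms] le[OF assms(2,1)] by simp
qed

lemma gdist_triangle:
  assumes "u \<in> V" "w \<in> V" "z \<in> V"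
  shows "d u z \<le> d u w + d w z"
proof -
  obtain xs where xs: "walk V E xs" "hd xs = u" "last xs = w" "length xs = Suc (d u w)"
    using gdist_ex assms by blast
  obtain ys where ys: "walk V E ys" "hd ys = w" "last ys = z" "length ys = Suc (d w z)"
    using gdist_ex assms by blast
  show ?thesis
  proof (cases "tl ys = []")
    case True
    then have "ys = [w]" using ys by (cases ys) auto
    then show ?thesis using ys xs by simp
  next
    case False
    have ysc: "ys = w # tl ys" using ys by (cases ys) (auto simp: walk_def)
    have wt: "walk V E (tl ys)" using ys(1) False ysc walk_tl by (metis list.exhaust)
    have "E w (hd (tl ys))" using ys(1) False ysc by (metis list.exhaust walk_Cons list.sel(1))
    then have "walk V E (xs @ tl ys)" using xs walk_append[OF xs(1) wt] by simp
    moreover have "xs \<noteq> []" using xs by (simp add: walk_def)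
    ultimately have "d u z \<le> length (xs @ tl ys) - 1"
      using xs ys False by (intro gdist_le) (auto simp: last_tl)
    then show ?thesis using xs ys by simp
  qed
qed

lemma gdist_edge: assumes "E u w" shows "d u w \<le> 1"
proof -
  have "walk V E [u, w]" using assms E_V by (simp add: walk_Cons walk_single)
  then show ?thesis using gdist_le[of "[u,w]" u w] by simp
qed

lemma gdist_0: assumes "u \<in> V" "w \<in> V" "d u w = 0" shows "u = w"
proof -
  obtain xs where xs: "walk V E xs" "hd xs = u" "last xs = w" "length xs = Suc (d u w)"
    using gdist_ex assms by blast
  then show ?thesis using assms(3) by (cases xs) auto
qed

lemma gdist_edge_diff:
  assumes "E x y" "w \<in> V"
  shows "d w y \<le> Suc (d w x)"
  using gdist_triangle[of w x y] gdist_edge[OF assms(1)] E_V[OF assms(1)] assms(2) by simp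

end


definition reach :: "'a set \<Rightarrow> ('a \<Rightarrow> 'a \<Rightarrow> bool) \<Rightarrow> 'a \<Rightarrow> 'a \<Rightarrow> bool" where
  "reach V R u w \<longleftrightarrow> (\<exists>xs. walk V R xs \<and> hd xs = u \<and> last xs = w)"

lemma reach_refl: "u \<in> V \<Longrightarrow> reach V R u u"
  unfolding reach_def by (auto intro!: exI[of _ "[u]"] walk_single)

lemma reach_V: "reach V R u w \<Longrightarrow> u \<in> V \<and> w \<in> V"
proof -
  assume "reach V R u w"
  then obtain xs where xs: "walk V R xs" "hd xs = u" "last xs = w" unfolding reach_def by blast
  then have "xs \<noteq> []" "set xs \<subseteq> V" unfolding walk_def by auto
  moreover have "hd xs \<in> set xs" "last xs \<in> set xs" using \<open>xs \<noteq> []\<close> by simp_all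
  ultimately show ?thesis using xs(2,3) by blast
qed

lemma reach_trans: assumes "reach V R u w" "reach V R w z" shows "reach V R u z"
proof -
  obtain xs where xs: "walk V R xs" "hd xs = u" "last xs = w" using assms unfolding reach_def by blast
  obtain ys where ys: "walk V R ys" "hd ys = w" "last ys = z" using assms unfolding reach_def by blast
  show ?thesis
  proof (cases "tl ys = []")
    case True
    moreover have "ys \<noteq> []" using ys by (simp add: walk_def)
    ultimately have "ys = [w]" using ys by (cases ys) auto
    then show ?thesis using ys xs unfolding reach_def by auto
  next
    case False
    have ysc: "ys = w # tl ys" using ys by (cases ys) (auto simp: walk_def)
    have wt: "walk V R (tl ys)" using ys(1) False ysc walk_tl by (metis list.exhaust)
    have "R w (hd (tl ys))" using ys(1) False ysc by (metis list.exhaust walk_Cons list.sel(1))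
    then have "walk V R (xs @ tl ys)" using xs walk_append[OF xs(1) wt] by simp
    moreover have "xs \<noteq> []" using xs by (simp add: walk_def)
    ultimately show ?thesis
      unfolding reach_def using xs ys False by (intro exI[of _ "xs @ tl ys"]) (auto simp: last_tl)
  qed
qed

lemma reach_sym: assumes "reach V R u w" "\<And>x y. R x y \<Longrightarrow> R y x" shows "reach V R w u"
proof -
  obtain xs where xs: "walk V R xs" "hd xs = u" "last xs = w" using assms unfolding reach_def by blast
  have "xs \<noteq> []" using xs by (simp add: walk_def)
  then show ?thesis unfolding reach_def using xs walk_rev[OF xs(1) assms(2)]
    by (intro exI[of _ "rev xs"]) (auto simp: hd_rev last_rev)
qed

lemma reach_step: assumes "reach V R u w" "R w z" "z \<in> V" shows "reach V R u z"
proof -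
  have "walk V R [w, z]" using assms reach_V[OF assms(1)] by (simp add: walk_Cons walk_single)
  then have "reach V R w z" unfolding reach_def by (intro exI[of _ "[w, z]"]) simp
  then show ?thesis using reach_trans[OF assms(1)] by blast
qed

lemma components_reach: "components V R = {{w \<in> V. reach V R u w} | u. u \<in> V}"
  unfolding components_def reach_def by simp

locale mcut = sgraph +
  fixes F :: "'a set set" and \<alpha> :: "'a \<Rightarrow> 'a" and A B :: "'a set"
  assumes aut: "automorphism V E \<alpha>"
    and swap: "\<forall>u v. E u v \<and> {u, v} \<in> F \<longrightarrow> \<alpha> u = v \<and> \<alpha> v = u"
    and comps: "components V (delete_edges E F) = {A, B}"
    and AneB: "A \<noteq> B" and aA: "\<alpha> ` A = B" and aB: "\<alpha> ` B = A"
begin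

abbreviation "R \<equiv> delete_edges E F"

lemma mcut_swap: "mcut V E F \<alpha> B A"
proof -
  have c: "components V (delete_edges E F) = {B, A}" using comps by (simp add: insert_commute)
  show ?thesis
    by (rule mcut.intro[OF sgraph_axioms], rule mcut_axioms.intro[OF aut swap c not_sym[OF AneB] aB aA])
qed

lemma R_sym: "R x y \<Longrightarrow> R y x"
  unfolding delete_edges_def using E_sym by (auto simp: insert_commute)

lemma R_E: "R x y \<Longrightarrow> E x y"
  unfolding delete_edges_def by simp

lemma A_comp: "\<exists>u\<in>V. A = {w \<in> V. reach V R u w}"
proof -
  have "A \<in> {{w \<in> V. reach V R u w} | u. u \<in> V}" using comps unfolding components_reach by simp
  then show ?thesis by blast
qed

lemma B_comp: "\<exists>u\<in>V. B = {w \<in> V. reach V R u w}"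
proof -
  have "B \<in> {{w \<in> V. reach V R u w} | u. u \<in> V}" using comps unfolding components_reach by simp
  then show ?thesis by blast
qed

lemma reachR_sym: "reach V R u w \<Longrightarrow> reach V R w u"
  by (rule reach_sym) (auto intro: R_sym)

lemma A_V: "A \<subseteq> V"
proof -
  obtain u where "A = {w \<in> V. reach V R u w}" using A_comp by blast
  then show ?thesis by simp
qed
lemma B_V: "B \<subseteq> V"
proof -
  obtain u where "B = {w \<in> V. reach V R u w}" using B_comp by blast
  then show ?thesis by simp
qed

lemma cover: "w \<in> V \<Longrightarrow> w \<in> A \<or> w \<in> B"
proof -
  assume w: "w \<in> V"
  have "{z \<in> V. reach V R w z} \<in> components V R" using w unfolding components_reach by blast
  then have "{z \<in> V. reach V R w z} \<in> {A, B}" using comps by simp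
  moreover have "w \<in> {z \<in> V. reach V R w z}" using w reach_refl by fast
  ultimately show ?thesis by blast
qed

lemma comp_eq: assumes "u \<in> V" "u' \<in> V" "reach V R u u'"
  shows "{w \<in> V. reach V R u w} = {w \<in> V. reach V R u' w}"
proof -
  have "reach V R u w \<longleftrightarrow> reach V R u' w" for w
    using assms(3) reach_trans[of V R u u' w] reach_trans[of V R u' u w] reachR_sym[of u u'] by blast
  then show ?thesis by simp
qed

lemma disj: "A \<inter> B = {}"
proof (rule ccontr)
  assume "A \<inter> B \<noteq> {}"
  then obtain w where w: "w \<in> A" "w \<in> B" by blast
  obtain u1 where u1: "u1 \<in> V" "A = {w \<in> V. reach V R u1 w}" using A_comp by blast
  obtain u2 where u2: "u2 \<in> V" "B = {w \<in> V. reach V R u2 w}" using B_comp by blast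
  have "reach V R u1 w" "reach V R u2 w" using w u1(2) u2(2) by simp_all
  then have "reach V R u1 u2" using reach_trans[of V R u1 w u2] reachR_sym[of u2 w] by blast
  then have "A = B" using comp_eq[of u1 u2] u1 u2 by simp
  with AneB show False by simp
qed

lemma R_A: assumes "R p q" "p \<in> A" shows "q \<in> A"
proof -
  obtain u1 where u1: "u1 \<in> V" "A = {w \<in> V. reach V R u1 w}" using A_comp by blast
  have qV: "q \<in> V" using assms R_E E_V by blast
  have "reach V R u1 p" using assms(2) u1 by simp
  then have "reach V R u1 q" using reach_step[of V R u1 p q] assms(1) qV by blast
  then show ?thesis using u1 qV by simp
qed

lemma R_B: assumes "R p q" "p \<in> B" shows "q \<in> B"
proof -
  obtain u1 where u1: "u1 \<in> V" "B = {w \<in> V. reach V R u1 w}" using B_comp by blast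
  have qV: "q \<in> V" using assms R_E E_V by blast
  have "reach V R u1 p" using assms(2) u1 by simp
  then have "reach V R u1 q" using reach_step[of V R u1 p q] assms(1) qV by blast
  then show ?thesis using u1 qV by simp
qed

lemma a_V: "x \<in> V \<Longrightarrow> \<alpha> x \<in> V"
proof -
  assume "x \<in> V"
  moreover have "\<alpha> ` V = V" using aut unfolding automorphism_def bij_betw_def by (elim conjE)
  ultimately show ?thesis by blast
qed

lemma a_E: "x \<in> V \<Longrightarrow> y \<in> V \<Longrightarrow> E x y \<Longrightarrow> E (\<alpha> x) (\<alpha> y)"
proof -
  have h: "\<forall>u\<in>V. \<forall>v\<in>V. E u v = E (\<alpha> u) (\<alpha> v)" using aut unfolding automorphism_def by (rule conjunct2)
  assume "x \<in> V" "y \<in> V" "E x y"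
  then show ?thesis using h by blast
qed

lemma edge_AB: assumes "E p q" "p \<in> A" "q \<in> B"
  shows "{p, q} \<in> F \<and> \<alpha> q = p \<and> \<alpha> p = q"
proof -
  have "{p, q} \<in> F"
  proof (rule ccontr)
    assume "{p, q} \<notin> F"
    then have "R p q" using assms unfolding delete_edges_def by simp
    then have "q \<in> A" using R_A assms(2) by blast
    then show False using disj assms(3) by blast
  qed
  then show ?thesis using swap[rule_format, of p q] assms(1) by simp
qed

lemma edge_F: assumes "E p q" "{p, q} \<in> F" "p \<in> A" shows "q \<in> B"
proof -
  have "\<alpha> p = q" using swap[rule_format, of p q] assms(1,2) by simp
  moreover have "\<alpha> p \<in> B" using assms(3) aA by (metis imageI)
  ultimately show ?thesis by simp
qed

lemma fold:
  assumes w: "w \<in> A" and z: "z \<in> B"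
  shows "d w (\<alpha> z) < d w z"
proof -
  have wV: "w \<in> V" and zV: "z \<in> V" using w z A_V B_V by auto
  obtain xs where xs: "walk V E xs" "hd xs = w" "last xs = z" "length xs = Suc (d w z)"
    using gdist_ex wV zV by blast
  have ne: "xs \<noteq> []" using xs by (simp add: walk_def)
  have ex: "\<exists>m. m < length xs \<and> xs ! m \<in> B"
    using xs ne z by (intro exI[of _ "length xs - 1"]) (simp add: last_conv_nth)
  define m where "m = (LEAST m. m < length xs \<and> xs ! m \<in> B)"
  have m: "m < length xs" "xs ! m \<in> B" using LeastI_ex[OF ex] unfolding m_def by auto
  have m0: "m \<noteq> 0"
  proof
    assume "m = 0"
    then have "w \<in> B" using m xs ne by (simp add: hd_conv_nth)
    then show False using w disj by blast
  qed
  have "\<not> (m - 1 < length xs \<and> xs ! (m - 1) \<in> B)"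
    using not_less_Least[of "m - 1" "\<lambda>m. m < length xs \<and> xs ! m \<in> B"] m0 unfolding m_def by linarith
  then have "xs ! (m - 1) \<notin> B" using m by linarith
  moreover have "xs ! (m - 1) \<in> V" using m walk_nth_V[OF xs(1), of "m - 1"] by linarith
  ultimately have pA: "xs ! (m - 1) \<in> A" using cover by blast
  have "m - 1 < length xs - 1" using m m0 by linarith
  with xs(1) have "E (xs ! (m - 1)) (xs ! Suc (m - 1))" unfolding walk_def by blast
  then have Epq: "E (xs ! (m - 1)) (xs ! m)" using m0 by simp
  have am: "\<alpha> (xs ! m) = xs ! (m - 1)" using edge_AB[OF Epq pA m(2)] by blast
  define ys where "ys = take (m - 1) xs @ map \<alpha> (drop m xs)"
  have wd: "walk V E (map \<alpha> (drop m xs))"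
    using walk_map[OF walk_drop[OF xs(1) m(1)], of \<alpha> V E] a_V a_E by blast
  have hd_d: "hd (map \<alpha> (drop m xs)) = xs ! (m - 1)" using m am by (simp add: hd_map hd_drop_conv_nth)
  have ys_walk: "walk V E ys"
  proof (cases "m - 1 = 0")
    case True then show ?thesis using wd unfolding ys_def by simp
  next
    case False
    have wt: "walk V E (take (m - 1) xs)" using walk_take[OF xs(1)] False by simp
    have "take (m - 1) xs \<noteq> []" using False m ne by simp
    then have "last (take (m - 1) xs) = take (m - 1) xs ! (m - 2)" using m False
      by (simp add: last_conv_nth numeral_2_eq_2)
    also have "\<dots> = xs ! (m - 2)" using False by simp
    finally have l: "last (take (m - 1) xs) = xs ! (m - 2)" .
    have "m - 2 < length xs - 1" using m False by linarith
    with xs(1) have "E (xs ! (m - 2)) (xs ! Suc (m - 2))" unfolding walk_def by blast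
    moreover have "Suc (m - 2) = m - 1" using False by linarith
    ultimately have "E (xs ! (m - 2)) (xs ! (m - 1))" by simp
    then show ?thesis unfolding ys_def using walk_append[OF wt wd] hd_d l by simp
  qed
  have ys_hd: "hd ys = w"
  proof (cases "m - 1 = 0")
    case True then show ?thesis using hd_d xs ne unfolding ys_def by (simp add: hd_conv_nth)
  next
    case False then show ?thesis using xs(2) ne unfolding ys_def by (cases xs) (auto simp: take_Cons')
  qed
  have ys_last: "last ys = \<alpha> z" unfolding ys_def using m xs ne
    by (simp add: last_map last_drop)
  have ys_len: "length ys = length xs - 1" unfolding ys_def using m m0 by simp
  have "d w (\<alpha> z) \<le> length ys - 1" using gdist_le[OF ys_walk ys_hd ys_last] .
  then show ?thesis using ys_len xs(4) m m0 by linarith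
qed

lemma side_dist:
  assumes "E x y" "{x, y} \<in> F" "x \<in> A" "w \<in> A"
  shows "d w y = Suc (d w x)"
proof -
  have yB: "y \<in> B" using edge_F assms(1,2,3) by blast
  have "\<alpha> y = x" using swap[rule_format, of x y] assms(1,2) by simp
  then have 1: "d w x < d w y" using fold[OF assms(4) yB] by simp
  have "w \<in> V" using assms(4) A_V by blast
  then have "d w y \<le> Suc (d w x)" using gdist_edge_diff[OF assms(1)] by blast
  with 1 show ?thesis by simp
qed

end

lemma (in mcut) side_dist_B:
  assumes "E x y" "{x, y} \<in> F" "x \<in> A" "w \<in> B"
  shows "d w x = Suc (d w y)"
proof -
  interpret s: mcut V E F \<alpha> B A by (rule mcut_swap)
  have yB: "y \<in> B" using edge_F assms(1,2,3) by blast
  have "E y x" using assms(1) E_sym by blast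
  moreover have "{y, x} \<in> F" using assms(2) by (simp add: insert_commute)
  ultimately show ?thesis using s.side_dist[OF _ _ yB assms(4)] by simp
qed

lemma (in mcut) fold_B:
  assumes "w \<in> B" "z \<in> A"
  shows "d w (\<alpha> z) < d w z"
proof -
  interpret s: mcut V E F \<alpha> B A by (rule mcut_swap)
  show ?thesis using s.fold[OF assms] .
qed



definition cd :: "nat \<Rightarrow> nat \<Rightarrow> nat \<Rightarrow> nat" where
  "cd n p q = min (if p \<le> q then q - p else p - q) (n - (if p \<le> q then q - p else p - q))"

lemma cd_sym: "cd n p q = cd n q p"
  unfolding cd_def by auto

lemma cd_step1: "p < n \<Longrightarrow> r < n \<Longrightarrow> cd n p (Suc r mod n) \<le> Suc (cd n p r)"
  by (cases "Suc r = n") (auto simp: cd_def)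

lemma cd_step2: "p < n \<Longrightarrow> r < n \<Longrightarrow> cd n p r \<le> Suc (cd n p (Suc r mod n))"
  by (cases "Suc r = n") (auto simp: cd_def)

lemma inW_iff:
  fixes i j k :: nat
  assumes "1 \<le> j" "j \<le> i" "k < 2*i"
  shows "cd (2*i) j k < cd (2*i) (j - 1) k \<longleftrightarrow> j \<le> k \<and> k \<le> j + i - 1"
  using assms unfolding cd_def min_def by (auto split: if_splits)

lemma comb:
  fixes i p q :: nat
  assumes "2 \<le> i" "p < 2*i" "q < 2*i"
    and "\<not> cd (2*i) 1 p < cd (2*i) (1 - 1) p" "cd (2*i) 1 q < cd (2*i) (1 - 1) q"
    and "cd (2*i) 2 p < cd (2*i) (2 - 1) p \<longleftrightarrow> cd (2*i) 2 q < cd (2*i) (2 - 1) q"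
    and "cd (2*i) i p < cd (2*i) (i - 1) p \<longleftrightarrow> cd (2*i) i q < cd (2*i) (i - 1) q"
  shows "(q = i \<and> p = i + 1) \<or> (q = 1 \<and> p = 0)"
proof -
  note h1 = inW_iff[of 1 i p] inW_iff[of 1 i q]
  note h2 = inW_iff[of 2 i p] inW_iff[of 2 i q]
  note h3 = inW_iff[of i i p] inW_iff[of i i q]
  have a1: "\<not> (1 \<le> p \<and> p \<le> i)" using assms(1,2,4) h1(1) by simp
  have a2: "1 \<le> q \<and> q \<le> i" using assms(1,3,5) h1(2) by simp
  have a3: "(2 \<le> p \<and> p \<le> i + 1) \<longleftrightarrow> (2 \<le> q \<and> q \<le> i + 1)"
    using assms(1,2,3,6) h2 by simp
  have a4: "(i \<le> p \<and> p \<le> i + i - 1) \<longleftrightarrow> (i \<le> q \<and> q \<le> i + i - 1)"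
    using assms(1,2,3,7) h3 by simp
  show ?thesis using a1 a2 a3 a4 assms(1,2,3) by linarith
qed

lemma pattern:
  fixes i j :: nat
  assumes "2 \<le> j" "j \<le> i"
  shows "cd (2*i) j i < cd (2*i) (j - 1) i" "cd (2*i) j (i+1) < cd (2*i) (j - 1) (i+1)"
    "\<not> cd (2*i) j 1 < cd (2*i) (j - 1) 1" "\<not> cd (2*i) j 0 < cd (2*i) (j - 1) 0"
  using assms inW_iff[of j i i] inW_iff[of j i "i+1"] inW_iff[of j i 1] inW_iff[of j i 0] by auto



locale mctx = sgraph +
  fixes v :: "nat \<Rightarrow> 'a" and i :: nat and P :: "'a set set set"
  assumes i2: "2 \<le> i"
    and cvx: "convex_cycle V E v (2 * i)"
    and Pcov: "\<Union>P = edges E"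
    and Pdisj: "\<forall>F1\<in>P. \<forall>F2\<in>P. F1 \<noteq> F2 \<longrightarrow> F1 \<inter> F2 = {}"
    and Pcut: "\<forall>F\<in>P. \<exists>\<alpha>. automorphism V E \<alpha> \<and>
          (\<forall>u v. E u v \<and> {u, v} \<in> F \<longrightarrow> \<alpha> u = v \<and> \<alpha> v = u) \<and>
          (\<exists>A B. components V (delete_edges E F) = {A, B} \<and> A \<noteq> B \<and> \<alpha> ` A = B \<and> \<alpha> ` B = A)"
begin

abbreviation "n \<equiv> 2 * i"
abbreviation "C \<equiv> v ` {..<n}"

lemma class_ex: "E x y \<Longrightarrow> \<exists>F\<in>P. {x, y} \<in> F"
proof -
  assume "E x y"
  then have "{x, y} \<in> edges E" unfolding edges_def by blast
  then have "{x, y} \<in> \<Union>P" using Pcov by simp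
  then show ?thesis by (simp only: Union_iff)
qed

lemma class_uniq: "F \<in> P \<Longrightarrow> F' \<in> P \<Longrightarrow> e \<in> F \<Longrightarrow> e \<in> F' \<Longrightarrow> F = F'"
proof (rule ccontr)
  assume "F \<in> P" "F' \<in> P" "e \<in> F" "e \<in> F'" "F \<noteq> F'"
  then have "F \<inter> F' = {}" using Pdisj by simp
  then show False using \<open>e \<in> F\<close> \<open>e \<in> F'\<close> by blast
qed

lemma cut_ex: assumes "F \<in> P" shows "\<exists>\<alpha> A B. mcut V E F \<alpha> A B"
proof -
  obtain \<alpha> A B where h: "automorphism V E \<alpha>" "\<forall>u v. E u v \<and> {u, v} \<in> F \<longrightarrow> \<alpha> u = v \<and> \<alpha> v = u"
    "components V (delete_edges E F) = {A, B}" "A \<noteq> B" "\<alpha> ` A = B" "\<alpha> ` B = A"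
    using Pcut assms by metis
  have "mcut V E F \<alpha> A B"
    by (rule mcut.intro[OF sgraph_axioms], rule mcut_axioms.intro[OF h])
  then show ?thesis by blast
qed

lemma cut_or: assumes "F \<in> P" "x \<in> V" shows "\<exists>\<alpha> A B. mcut V E F \<alpha> A B \<and> x \<in> A"
proof -
  obtain \<alpha> A B where m: "mcut V E F \<alpha> A B" using cut_ex assms by blast
  show ?thesis
  proof (cases "x \<in> A")
    case True then show ?thesis using m by blast
  next
    case False
    then have "x \<in> B" using mcut.cover[OF m assms(2)] by blast
    then show ?thesis using mcut.mcut_swap[OF m] by blast
  qed
qed

lemma isc: "is_cycle V E v n" using cvx unfolding convex_cycle_def by blast
lemma n3: "3 \<le> n" using i2 by simp
lemma vinj: "inj_on v {..<n}" using isc unfolding is_cycle_def by blast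
lemma CV: "C \<subseteq> V" using isc unfolding is_cycle_def by blast
lemma vV: "v k \<in> V" if "k < n" using CV that by blast
lemma cyc_edge: "k < n \<Longrightarrow> E (v k) (v (Suc k mod n))" using isc unfolding is_cycle_def by blast

lemma veq: "p < n \<Longrightarrow> q < n \<Longrightarrow> v p = v q \<longleftrightarrow> p = q"
  using vinj unfolding inj_on_def by blast

lemma u_edge: "E (v (t mod n)) (v (Suc t mod n))"
proof -
  have "t mod n < n" using n3 by simp
  then have "E (v (t mod n)) (v (Suc (t mod n) mod n))" by (rule cyc_edge)
  then show ?thesis by (simp add: mod_Suc_eq)
qed

lemma arc_walk: "walk V E (map (\<lambda>k. v ((s + k) mod n)) [0..<Suc m])"
proof -
  have "v (t mod n) \<in> V" for t using n3 vV by simp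
  moreover have "E (v ((s + k) mod n)) (v ((s + Suc k) mod n))" for k
    using u_edge[of "s + k"] by simp
  ultimately show ?thesis unfolding walk_def by (auto simp del: upt_Suc)
qed

lemma dist_le: "d (v (s mod n)) (v ((s+m) mod n)) \<le> m"
proof -
  have "d (v ((s + 0) mod n)) (v ((s+m) mod n)) \<le> length (map (\<lambda>k. v ((s + k) mod n)) [0..<Suc m]) - 1"
    by (rule gdist_le[OF arc_walk]) (simp_all add: hd_map last_map del: upt_Suc)
  then show ?thesis by simp
qed

lemma dist_upper0: assumes "p \<le> q" "q < n" shows "d (v p) (v q) \<le> cd n p q"
proof -
  have pq: "p < n" using assms by simp
  have 1: "d (v p) (v q) \<le> q - p" using dist_le[of p "q - p"] assms pq by simp
  have "d (v q) (v p) \<le> n - (q - p)"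
  proof -
    have "q + (n - (q - p)) = p + n" using assms pq by linarith
    then have "(q + (n - (q - p))) mod n = p" using pq by simp
    then show ?thesis using dist_le[of q "n - (q - p)"] assms by simp
  qed
  then have 2: "d (v p) (v q) \<le> n - (q - p)" using gdist_sym vV pq assms by metis
  show ?thesis using 1 2 assms unfolding cd_def by simp
qed

lemma dist_upper: assumes "p < n" "q < n" shows "d (v p) (v q) \<le> cd n p q"
proof (cases "p \<le> q")
  case True then show ?thesis using dist_upper0 assms by blast
next
  case False
  then have "d (v q) (v p) \<le> cd n q p" using dist_upper0 assms by simp
  then show ?thesis using gdist_sym[OF vV[OF assms(1)] vV[OF assms(2)]] cd_sym by metis
qed

lemma dist_lower: assumes "p < n" "q < n" shows "cd n p q \<le> d (v p) (v q)"
proof -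
  obtain xs where xs: "walk V E xs" "hd xs = v p" "last xs = v q" "length xs = Suc (d (v p) (v q))"
    using gdist_ex vV assms by blast
  have ne: "xs \<noteq> []" using xs by (simp add: walk_def)
  have "hd xs \<in> C" "last xs \<in> C" using xs assms by auto
  then have cv: "set xs \<subseteq> C \<and> (\<forall>k < length xs - 1. {xs ! k, xs ! Suc k} \<in> cycle_edges v n)"
    using cvx xs unfolding convex_cycle_def by simp
  have main: "\<exists>r<n. xs ! k = v r \<and> cd n p r \<le> k" if "k < length xs" for k
    using that
  proof (induction k)
    case 0
    then show ?case using xs ne assms by (intro exI[of _ p]) (simp add: hd_conv_nth cd_def)
  next
    case (Suc k)
    then obtain r where r: "r < n" "xs ! k = v r" "cd n p r \<le> k" by auto
    have "xs ! Suc k \<in> C" using cv Suc.prems nth_mem by blast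
    then obtain r' where r': "r' < n" "xs ! Suc k = v r'" by auto
    have "k < length xs - 1" using Suc.prems by simp
    then have ce: "{xs ! k, xs ! Suc k} \<in> cycle_edges v n" and ed: "E (xs ! k) (xs ! Suc k)"
      using cv xs(1) unfolding walk_def by auto
    obtain m where m: "m < n" "{xs ! k, xs ! Suc k} = {v m, v (Suc m mod n)}"
      using ce unfolding cycle_edges_def by blast
    have ne2: "xs ! k \<noteq> xs ! Suc k" using ed E_irrefl by metis
    have sm: "Suc m mod n < n" using n3 by simp
    have "(xs ! k = v m \<and> xs ! Suc k = v (Suc m mod n)) \<or> (xs ! k = v (Suc m mod n) \<and> xs ! Suc k = v m)"
      using m(2) by (simp add: doubleton_eq_iff)
    then have "(r = m \<and> r' = Suc m mod n) \<or> (r = Suc m mod n \<and> r' = m)"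
    proof (elim disjE conjE)
      assume "xs ! k = v m" "xs ! Suc k = v (Suc m mod n)"
      then have "v r = v m" "v r' = v (Suc m mod n)" using r(2) r'(2) by simp_all
      then show ?thesis using veq[of r m] veq[of r' "Suc m mod n"] r(1) r'(1) m(1) sm by simp
    next
      assume "xs ! k = v (Suc m mod n)" "xs ! Suc k = v m"
      then have "v r = v (Suc m mod n)" "v r' = v m" using r(2) r'(2) by simp_all
      then show ?thesis using veq[of r "Suc m mod n"] veq[of r' m] r(1) r'(1) m(1) sm by simp
    qed
    then have "cd n p r' \<le> Suc (cd n p r)"
      using cd_step1[OF assms(1) m(1)] cd_step2[OF assms(1) m(1)] by (elim disjE conjE) simp_all
    then have "cd n p r' \<le> Suc k" using r(3) by linarith
    then show ?case using r'(1,2) by blast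
  qed
  obtain r where r: "r < n" "xs ! (length xs - 1) = v r" "cd n p r \<le> length xs - 1"
    using main[of "length xs - 1"] ne by auto
  have "xs ! (length xs - 1) = v q" using xs(3) ne by (simp add: last_conv_nth)
  then have "v r = v q" using r(2) by simp
  then have "r = q" using r(1) veq[of r q] assms(2) by blast
  then show ?thesis using r(3) xs(4) by simp
qed

lemma cdist: "p < n \<Longrightarrow> q < n \<Longrightarrow> d (v p) (v q) = cd n p q"
proof -
  assume "p < n" "q < n"
  then show ?thesis using dist_lower[of p q] dist_upper[of p q] by linarith
qed

end


context mcut begin

lemma dpat:
  assumes "E x y" "{x, y} \<in> F" "x \<in> A" "w \<in> V"
  shows "(w \<in> A \<and> d w y = Suc (d w x)) \<or> (w \<in> B \<and> d w x = Suc (d w y))"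
proof (cases "w \<in> A")
  case True then show ?thesis using side_dist[OF assms(1,2,3)] by blast
next
  case False
  then have "w \<in> B" using cover assms(4) by blast
  then show ?thesis using side_dist_B[OF assms(1,2,3)] by blast
qed

lemma W_eq:
  assumes "E x y" "{x, y} \<in> F" "x \<in> A"
  shows "W V E x y = A"
proof -
  have xV: "x \<in> V" and yV: "y \<in> V" using E_V assms(1) by auto
  have "w \<in> W V E x y \<longleftrightarrow> w \<in> A" for w
  proof (cases "w \<in> V")
    case True
    have s1: "d x w = d w x" using gdist_sym[OF xV True] .
    have s2: "d y w = d w y" using gdist_sym[OF yV True] .
    show ?thesis
    proof (cases "w \<in> A")
      case True2: True
      then have "d w y = Suc (d w x)" using side_dist[OF assms True2] by simp
      then show ?thesis using True True2 s1 s2 unfolding W_def by simp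
    next
      case False
      then have wB: "w \<in> B" using cover True by blast
      then have "d w x = Suc (d w y)" using side_dist_B[OF assms wB] by simp
      then show ?thesis using False s1 s2 unfolding W_def by simp
    qed
  next
    case False
    then show ?thesis using A_V unfolding W_def by blast
  qed
  then show ?thesis by blast
qed

lemma edge_F_B: assumes "E p q" "{p, q} \<in> F" "p \<in> B" shows "q \<in> A"
proof -
  interpret s: mcut V E F \<alpha> B A by (rule mcut_swap)
  show ?thesis using s.edge_F[OF assms] .
qed

lemma theta_same:
  assumes "E a b" "E x y" "{a, b} \<in> F" "{x, y} \<in> F" "x \<in> A"
  shows "Theta V E a b x y"
proof -
  have aV: "a \<in> V" and bV: "b \<in> V" using E_V assms(1) by auto
  show ?thesis
  proof (cases "a \<in> A")
    case True
    then have bB: "b \<in> B" using edge_F[OF assms(1,3)] by blast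
    have 1: "d a y = Suc (d a x)" using side_dist[OF assms(2,4,5) True] .
    have 2: "d b x = Suc (d b y)" using side_dist_B[OF assms(2,4,5) bB] .
    show ?thesis unfolding Theta_def using 1 2 by simp
  next
    case False
    then have aB: "a \<in> B" using cover aV by blast
    then have bA: "b \<in> A" using edge_F_B[OF assms(1,3)] by blast
    have 1: "d a x = Suc (d a y)" using side_dist_B[OF assms(2,4,5) aB] .
    have 2: "d b y = Suc (d b x)" using side_dist[OF assms(2,4,5) bA] .
    show ?thesis unfolding Theta_def using 1 2 by simp
  qed
qed

lemma theta_diff:
  assumes "E a b" "E x y" "{a, b} \<notin> F" "{x, y} \<in> F" "x \<in> A"
  shows "\<not> Theta V E a b x y"
proof -
  have aV: "a \<in> V" using E_V assms(1) by auto
  have R: "R a b" using assms(1,3) unfolding delete_edges_def by simp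
  show ?thesis
  proof (cases "a \<in> A")
    case True
    then have bA: "b \<in> A" using R_A[OF R] by blast
    have 1: "d a y = Suc (d a x)" using side_dist[OF assms(2,4,5) True] .
    have 2: "d b y = Suc (d b x)" using side_dist[OF assms(2,4,5) bA] .
    show ?thesis unfolding Theta_def using 1 2 by simp
  next
    case False
    then have aB: "a \<in> B" using cover aV by blast
    then have bB: "b \<in> B" using R_B[OF R] by blast
    have 1: "d a x = Suc (d a y)" using side_dist_B[OF assms(2,4,5) aB] .
    have 2: "d b x = Suc (d b y)" using side_dist_B[OF assms(2,4,5) bB] .
    show ?thesis unfolding Theta_def using 1 2 by simp
  qed
qed

end

context mctx begin

lemma theta_class:
  assumes "E a b" "E x y" "F \<in> P" "F' \<in> P" "{a, b} \<in> F'" "{x, y} \<in> F" "Theta V E a b x y"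
  shows "F' = F"
proof -
  have xV: "x \<in> V" using E_V assms(2) by blast
  obtain \<alpha> A B where m: "mcut V E F \<alpha> A B" "x \<in> A" using cut_or[OF assms(3) xV] by blast
  have "{a, b} \<in> F"
  proof (rule ccontr)
    assume "{a, b} \<notin> F"
    then show False using mcut.theta_diff[OF m(1) assms(1,2) _ assms(6) m(2)] assms(7) by blast
  qed
  then show ?thesis using class_uniq[OF assms(4,3) assms(5)] by blast
qed

lemma theta_samec:
  assumes "E a b" "E x y" "F \<in> P" "{a, b} \<in> F" "{x, y} \<in> F"
  shows "Theta V E a b x y"
proof -
  have xV: "x \<in> V" using E_V assms(2) by blast
  obtain \<alpha> A B where m: "mcut V E F \<alpha> A B" "x \<in> A" using cut_or[OF assms(3) xV] by blast
  show ?thesis using mcut.theta_same[OF m(1) assms(1,2,4,5) m(2)] .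
qed

lemma convex_set:
  assumes "walk V E xs" "hd xs \<in> C" "last xs \<in> C" "length xs = Suc (d (hd xs) (last xs))"
  shows "set xs \<subseteq> C"
  using cvx assms unfolding convex_cycle_def by blast

end


lemma cd_vals:
  fixes i j :: nat
  assumes "2 \<le> i" "1 \<le> j" "j \<le> i"
  shows "cd (2*i) (j+i-1) (j-1) = i" "cd (2*i) ((j+i) mod (2*i)) j = i"
    "cd (2*i) (j+i-1) j = i - 1" "cd (2*i) (j-1) ((j+i) mod (2*i)) = i - 1"
    "(j + i + (i - 1)) mod (2*i) = j - 1" "(j+i) mod (2*i) < 2*i"
proof -
  have q: "(j+i) mod (2*i) = (if j = i then 0 else j+i)"
  proof (cases "j = i")
    case True then show ?thesis by (simp add: mult_2)
  next
    case False then show ?thesis using assms by simp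
  qed
  show "cd (2*i) (j+i-1) (j-1) = i" using assms unfolding cd_def by auto
  show "cd (2*i) ((j+i) mod (2*i)) j = i" using assms unfolding q cd_def by auto
  show "cd (2*i) (j+i-1) j = i - 1" using assms unfolding cd_def by auto
  show "cd (2*i) (j-1) ((j+i) mod (2*i)) = i - 1" using assms unfolding q cd_def by auto
  have "j + i + (i - 1) = (j - 1) + 2 * i" using assms by simp
  moreover have "((j - 1) + 2 * i) mod (2*i) = (j - 1) mod (2 * i)" by (rule mod_add_self2)
  moreover have "(j - 1) mod (2 * i) = j - 1" using assms by simp
  ultimately show "(j + i + (i - 1)) mod (2*i) = j - 1" by metis
  show "(j+i) mod (2*i) < 2*i" using assms by simp
qed

lemma cd_vals2:
  fixes i j :: nat
  assumes "2 \<le> j" "j \<le> i"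
  shows "cd (2*i) 0 (j-1) = j - 1" "cd (2*i) 1 j = j - 1" "cd (2*i) 0 j = j" "cd (2*i) 1 (j-1) = j - 2"
  using assms unfolding cd_def by auto

context mctx begin

lemma refl_C:
  assumes j: "1 \<le> j" "j \<le> i" and F: "F \<in> P" "{v (j-1), v j} \<in> F"
    and m: "mcut V E F \<alpha> A B" and k: "k < n"
  shows "\<alpha> (v k) \<in> C"
proof -
  define q where "q = (j+i) mod n"
  note cv = cd_vals[OF i2 j]
  have qn: "q < n" using cv(6) unfolding q_def .
  have jn: "j - 1 < n" "j < n" "j + i - 1 < n" using j i2 by auto
  have e1: "E (v (j-1)) (v j)" using cyc_edge[OF jn(1)] j i2 by simp
  have "Suc (j + i - 1) mod n = q" unfolding q_def using j by simp
  then have e2: "E (v (j+i-1)) (v q)" using cyc_edge[OF jn(3)] by simp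
  obtain F' where F': "F' \<in> P" "{v (j+i-1), v q} \<in> F'" using class_ex[OF e2] by blast
  have th: "Theta V E (v (j+i-1)) (v q) (v (j-1)) (v j)"
  proof -
    have "d (v (j+i-1)) (v (j-1)) = i" using cdist[OF jn(3) jn(1)] cv(1) by simp
    moreover have "d (v q) (v j) = i" using cdist[OF qn jn(2)] cv(2) unfolding q_def by simp
    moreover have "d (v (j+i-1)) (v j) = i - 1" using cdist[OF jn(3) jn(2)] cv(3) by simp
    moreover have "d (v q) (v (j-1)) = i - 1" using cdist[OF qn jn(1)] cv(4) cd_sym unfolding q_def by metis
    ultimately show ?thesis unfolding Theta_def using i2 by simp
  qed
  have "F' = F" using theta_class[OF e2 e1 F(1) F'(1) F'(2) F(2) th] .
  then have F2: "{v (j+i-1), v q} \<in> F" using F'(2) by simp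
  have sw: "\<forall>u w. E u w \<and> {u, w} \<in> F \<longrightarrow> \<alpha> u = w \<and> \<alpha> w = u" using m unfolding mcut_def mcut_axioms_def by blast
  have s1: "\<alpha> (v (j-1)) = v j" "\<alpha> (v j) = v (j-1)" using sw[rule_format, of "v (j-1)" "v j"] e1 F(2) by simp_all
  have s2: "\<alpha> (v (j+i-1)) = v q" "\<alpha> (v q) = v (j+i-1)" using sw[rule_format, of "v (j+i-1)" "v q"] e2 F2 by simp_all
  have aV: "\<And>x. x \<in> V \<Longrightarrow> \<alpha> x \<in> V" using mcut.a_V[OF m] by blast
  have aE: "\<And>x y. x \<in> V \<Longrightarrow> y \<in> V \<Longrightarrow> E x y \<Longrightarrow> E (\<alpha> x) (\<alpha> y)" using mcut.a_E[OF m] by blast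
  have arc: "set (map \<alpha> (map (\<lambda>t. v ((s + t) mod n)) [0..<Suc (i - 1)])) \<subseteq> C"
    if h1: "\<alpha> (v (s mod n)) \<in> C" and h2: "\<alpha> (v ((s + (i-1)) mod n)) \<in> C"
      and h3: "d (\<alpha> (v (s mod n))) (\<alpha> (v ((s + (i-1)) mod n))) = i - 1" for s
  proof (rule convex_set)
    show "walk V E (map \<alpha> (map (\<lambda>t. v ((s + t) mod n)) [0..<Suc (i - 1)]))"
      by (rule walk_map[OF arc_walk]) (use aV aE in auto)
    show "hd (map \<alpha> (map (\<lambda>t. v ((s + t) mod n)) [0..<Suc (i - 1)])) \<in> C"
      using h1 by (simp add: hd_map del: upt_Suc)
    show "last (map \<alpha> (map (\<lambda>t. v ((s + t) mod n)) [0..<Suc (i - 1)])) \<in> C"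
      using h2 by (simp add: last_map del: upt_Suc)
    show "length (map \<alpha> (map (\<lambda>t. v ((s + t) mod n)) [0..<Suc (i - 1)])) =
      Suc (d (hd (map \<alpha> (map (\<lambda>t. v ((s + t) mod n)) [0..<Suc (i - 1)])))
            (last (map \<alpha> (map (\<lambda>t. v ((s + t) mod n)) [0..<Suc (i - 1)]))))"
      using h3 i2 by (simp add: hd_map last_map del: upt_Suc)
  qed
  have vjC: "v (j-1) \<in> C" "v q \<in> C" "v j \<in> C" "v (j+i-1) \<in> C" using jn qn by auto
  have arc1: "set (map \<alpha> (map (\<lambda>t. v ((j + t) mod n)) [0..<Suc (i - 1)])) \<subseteq> C"
  proof (rule arc)
    have "j mod n = j" "(j + (i - 1)) mod n = j + i - 1" using jn by auto
    moreover have "d (v (j-1)) (v q) = i - 1" using cdist[OF jn(1) qn] cv(4) unfolding q_def by simp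
    ultimately show "\<alpha> (v (j mod n)) \<in> C" "\<alpha> (v ((j + (i - 1)) mod n)) \<in> C"
      "d (\<alpha> (v (j mod n))) (\<alpha> (v ((j + (i - 1)) mod n))) = i - 1"
      using s1 s2 vjC by simp_all
  qed
  have arc2: "set (map \<alpha> (map (\<lambda>t. v ((j + i + t) mod n)) [0..<Suc (i - 1)])) \<subseteq> C"
  proof (rule arc)
    have "(j + i) mod n = q" "(j + i + (i - 1)) mod n = j - 1" using cv(5) unfolding q_def by auto
    moreover have "d (v (j+i-1)) (v j) = i - 1" using cdist[OF jn(3) jn(2)] cv(3) by simp
    ultimately show "\<alpha> (v ((j + i) mod n)) \<in> C" "\<alpha> (v ((j + i + (i - 1)) mod n)) \<in> C"
      "d (\<alpha> (v ((j + i) mod n))) (\<alpha> (v ((j + i + (i - 1)) mod n))) = i - 1"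
      using s1 s2 vjC by simp_all
  qed
  show ?thesis
  proof (cases "j \<le> k \<and> k \<le> j + i - 1")
    case True
    define t where "t = k - j"
    have "t < Suc (i - 1)" "(j + t) mod n = k" using True k i2 unfolding t_def by auto
    then have "\<alpha> (v k) \<in> set (map \<alpha> (map (\<lambda>t. v ((j + t) mod n)) [0..<Suc (i - 1)]))"
      by (auto simp del: upt_Suc intro!: image_eqI[of _ _ t])
    then show ?thesis using arc1 by blast
  next
    case False
    define t where "t = (if k < j then k + n - (j + i) else k - (j + i))"
    have "t < Suc (i - 1)" using False k j i2 unfolding t_def by auto
    moreover have "j + i + t = (if k < j then k + n else k)" using False k j i2 unfolding t_def by auto
    then have "(j + i + t) mod n = k" using k by auto
    ultimately have "\<alpha> (v k) \<in> set (map \<alpha> (map (\<lambda>t. v ((j + i + t) mod n)) [0..<Suc (i - 1)]))"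
      by (auto simp del: upt_Suc intro!: image_eqI[of _ _ t])
    then show ?thesis using arc2 by blast
  qed
qed

end


lemma exmin: assumes "(0::nat) < n" shows "\<exists>p<n. \<forall>k<n. (f p :: nat) \<le> f k"
proof -
  let ?S = "f ` {..<n}"
  have fin: "finite ?S" by simp
  have ne: "?S \<noteq> {}" using assms by auto
  have "Min ?S \<in> ?S" using Min_in[OF fin ne] .
  then obtain p where p: "p < n" "f p = Min ?S" by auto
  have "\<forall>k<n. f p \<le> f k" using p(2) Min_le[OF fin] by auto
  then show ?thesis using p(1) by blast
qed

context mctx begin

lemma gate:
  assumes j: "1 \<le> j" "j \<le> i" and w: "w \<in> V" and p: "p < n" "\<forall>k<n. d w (v p) \<le> d w (v k)"
  shows "w \<in> W V E (v j) (v (j-1)) \<longleftrightarrow> v p \<in> W V E (v j) (v (j-1))"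
proof -
  have jn: "j - 1 < n" "j < n" using j i2 by auto
  have e1: "E (v (j-1)) (v j)" using cyc_edge[OF jn(1)] j i2 by simp
  obtain F where F: "F \<in> P" "{v (j-1), v j} \<in> F" using class_ex[OF e1] by blast
  obtain \<alpha> A B where m: "mcut V E F \<alpha> A B" "v j \<in> A" using cut_or[OF F(1) vV[OF jn(2)]] by blast
  have e1': "E (v j) (v (j-1))" using E_sym[OF e1] .
  have F': "{v j, v (j-1)} \<in> F" using F(2) by (simp add: insert_commute)
  have WA: "W V E (v j) (v (j-1)) = A" using mcut.W_eq[OF m(1) e1' F' m(2)] .
  have rc: "\<And>k. k < n \<Longrightarrow> \<alpha> (v k) \<in> C" using refl_C[OF j F m(1)] by blast
  have vpV: "v p \<in> V" using vV[OF p(1)] .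
  have contra: "d w (\<alpha> (v p)) < d w (v p) \<Longrightarrow> False"
  proof -
    assume lt: "d w (\<alpha> (v p)) < d w (v p)"
    obtain k where k: "k < n" "\<alpha> (v p) = v k" using rc[OF p(1)] by auto
    have "d w (v p) \<le> d w (v k)" using p(2) k(1) by blast
    then show False using lt k(2) by simp
  qed
  have 1: "v p \<in> A" if wA: "w \<in> A"
  proof (rule ccontr)
    assume "v p \<notin> A"
    then have "v p \<in> B" using mcut.cover[OF m(1) vpV] by blast
    then show False using contra mcut.fold[OF m(1) wA] by blast
  qed
  have 2: "w \<in> A" if pA: "v p \<in> A"
  proof (rule ccontr)
    assume "w \<notin> A"
    then have wB: "w \<in> B" using mcut.cover[OF m(1) w] by blast
    then show False using contra mcut.fold_B[OF m(1) wB pA] by blast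
  qed
  show ?thesis unfolding WA using 1 2 by blast
qed

lemma Wcyc:
  assumes "1 \<le> j" "j \<le> i" "k < n"
  shows "v k \<in> W V E (v j) (v (j-1)) \<longleftrightarrow> cd n j k < cd n (j-1) k"
proof -
  have jn: "j - 1 < n" "j < n" using assms i2 by auto
  have "d (v j) (v k) = cd n j k" using cdist[OF jn(2) assms(3)] .
  moreover have "d (v (j-1)) (v k) = cd n (j-1) k" using cdist[OF jn(1) assms(3)] .
  ultimately show ?thesis unfolding W_def using vV[OF assms(3)] by simp
qed

lemma sameW:
  assumes ab: "E a b" "F0 \<in> P" "{a, b} \<in> F0" "{v 0, v 1} \<in> F0" and j: "2 \<le> j" "j \<le> i"
  shows "a \<in> W V E (v j) (v (j-1)) \<longleftrightarrow> b \<in> W V E (v j) (v (j-1))"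
proof -
  have jn: "j - 1 < n" "j < n" "0 < n" "1 < n" using j i2 by auto
  have e1: "E (v (j-1)) (v j)" using cyc_edge[OF jn(1)] j i2 by simp
  have e0: "E (v 0) (v 1)" using cyc_edge[OF jn(3)] i2 by simp
  obtain F where F: "F \<in> P" "{v (j-1), v j} \<in> F" using class_ex[OF e1] by blast
  have FF0: "F \<noteq> F0"
  proof
    assume "F = F0"
    then have th: "Theta V E (v 0) (v 1) (v (j-1)) (v j)"
      using theta_samec[OF e0 e1 ab(2) ab(4)] F(2) by simp
    note cv = cd_vals2[OF j]
    have "d (v 0) (v (j-1)) = j - 1" using cdist[OF jn(3) jn(1)] cv(1) by simp
    moreover have "d (v 1) (v j) = j - 1" using cdist[OF jn(4) jn(2)] cv(2) by simp
    moreover have "d (v 0) (v j) = j" using cdist[OF jn(3) jn(2)] cv(3) by simp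
    moreover have "d (v 1) (v (j-1)) = j - 2" using cdist[OF jn(4) jn(1)] cv(4) by simp
    ultimately show False using th j unfolding Theta_def by simp
  qed
  have abF: "{a, b} \<notin> F" using FF0 class_uniq[OF F(1) ab(2) _ ab(3)] by blast
  obtain \<alpha> A B where m: "mcut V E F \<alpha> A B" "v j \<in> A" using cut_or[OF F(1) vV[OF jn(2)]] by blast
  have e1': "E (v j) (v (j-1))" using E_sym[OF e1] .
  have F': "{v j, v (j-1)} \<in> F" using F(2) by (simp add: insert_commute)
  have WA: "W V E (v j) (v (j-1)) = A" using mcut.W_eq[OF m(1) e1' F' m(2)] .
  have R: "delete_edges E F a b" using ab(1) abF unfolding delete_edges_def by simp
  have aV: "a \<in> V" using E_V ab(1) by blast
  have "a \<in> A \<longleftrightarrow> b \<in> A"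
  proof
    assume "a \<in> A" then show "b \<in> A" using mcut.R_A[OF m(1) R] by blast
  next
    assume bA: "b \<in> A"
    show "a \<in> A"
    proof (rule ccontr)
      assume "a \<notin> A"
      then have "a \<in> B" using mcut.cover[OF m(1) aV] by blast
      then have "b \<in> B" using mcut.R_B[OF m(1) R] by blast
      then show False using bA mcut.disj[OF m(1)] by blast
    qed
  qed
  then show ?thesis unfolding WA .
qed

lemma core:
  assumes ab: "E a b" "F0 \<in> P" "{a, b} \<in> F0" "{v 0, v 1} \<in> F0"
    and sa: "a \<notin> W V E (v 1) (v 0)" and sb: "b \<in> W V E (v 1) (v 0)"
  shows "(\<forall>j\<in>{2..i}. a \<in> W V E (v j) (v (j-1)) \<and> b \<in> W V E (v j) (v (j-1))) \<or>
         (\<forall>j\<in>{2..i}. a \<notin> W V E (v j) (v (j-1)) \<and> b \<notin> W V E (v j) (v (j-1)))"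
proof -
  have aV: "a \<in> V" and bV: "b \<in> V" using E_V ab(1) by auto
  have n0: "0 < n" using i2 by simp
  obtain p where p: "p < n" "\<forall>k<n. d a (v p) \<le> d a (v k)" using exmin[OF n0, of "\<lambda>k. d a (v k)"] by blast
  obtain q where q: "q < n" "\<forall>k<n. d b (v q) \<le> d b (v k)" using exmin[OF n0, of "\<lambda>k. d b (v k)"] by blast
  have i1: "1 \<le> i" using i2 by simp
  have g1a: "a \<in> W V E (v 1) (v (1-1)) \<longleftrightarrow> v p \<in> W V E (v 1) (v (1-1))" using gate[OF _ i1 aV p] by simp
  have g1b: "b \<in> W V E (v 1) (v (1-1)) \<longleftrightarrow> v q \<in> W V E (v 1) (v (1-1))" using gate[OF _ i1 bV q] by simp
  have ga: "a \<in> W V E (v j) (v (j-1)) \<longleftrightarrow> cd n j p < cd n (j-1) p" if "1 \<le> j" "j \<le> i" for j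
    using gate[OF that aV p] Wcyc[OF that p(1)] by simp
  have gb: "b \<in> W V E (v j) (v (j-1)) \<longleftrightarrow> cd n j q < cd n (j-1) q" if "1 \<le> j" "j \<le> i" for j
    using gate[OF that bV q] Wcyc[OF that q(1)] by simp
  have h1: "\<not> cd n 1 p < cd n (1 - 1) p" using ga[of 1] sa i1 by simp
  have h2: "cd n 1 q < cd n (1 - 1) q" using gb[of 1] sb i1 by simp
  have s2: "a \<in> W V E (v 2) (v (2-1)) \<longleftrightarrow> b \<in> W V E (v 2) (v (2-1))" using sameW[OF ab _ i2] by simp
  have si: "a \<in> W V E (v i) (v (i-1)) \<longleftrightarrow> b \<in> W V E (v i) (v (i-1))" using sameW[OF ab i2] by simp
  have h3: "cd n 2 p < cd n (2 - 1) p \<longleftrightarrow> cd n 2 q < cd n (2 - 1) q"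
    using s2 ga[of 2] gb[of 2] i2 by simp
  have h4: "cd n i p < cd n (i - 1) p \<longleftrightarrow> cd n i q < cd n (i - 1) q"
    using si ga[of i] gb[of i] i2 by simp
  have c: "(q = i \<and> p = i + 1) \<or> (q = 1 \<and> p = 0)" using comb[OF i2 p(1) q(1) h1 h2 h3 h4] .
  show ?thesis
  proof (cases "q = i \<and> p = i + 1")
    case True
    have "a \<in> W V E (v j) (v (j-1)) \<and> b \<in> W V E (v j) (v (j-1))" if "j \<in> {2..i}" for j
    proof -
      have j: "2 \<le> j" "j \<le> i" "1 \<le> j" using that by auto
      show ?thesis using ga[OF j(3,2)] gb[OF j(3,2)] pattern[OF j(1,2)] True by simp
    qed
    then show ?thesis by blast
  next
    case False
    then have qp: "q = 1 \<and> p = 0" using c by blast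
    have "a \<notin> W V E (v j) (v (j-1)) \<and> b \<notin> W V E (v j) (v (j-1))" if "j \<in> {2..i}" for j
    proof -
      have j: "2 \<le> j" "j \<le> i" "1 \<le> j" using that by auto
      show ?thesis using ga[OF j(3,2)] gb[OF j(3,2)] pattern[OF j(1,2)] qp by simp
    qed
    then show ?thesis by blast
  qed
qed

end


lemma weaken:
  "(\<forall>F\<in>P. \<exists>a. X F a \<and> Y F a \<and> (\<exists>A B. Z1 F A B \<and> Z2 A B \<and> Z3 a A B \<and> Z4 a A B \<and> Z5 F a A \<and> Z6 F a B))
   \<Longrightarrow> (\<forall>F\<in>P. \<exists>a. X F a \<and> Y F a \<and> (\<exists>A B. Z1 F A B \<and> Z2 A B \<and> Z3 a A B \<and> Z4 a A B))"
  by blast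

theorem lemma7:
  fixes V :: "'a set" and E :: "'a \<Rightarrow> 'a \<Rightarrow> bool" and v :: "nat \<Rightarrow> 'a" and i :: nat and a b :: 'a
  assumes "mirror_graph V E"
    and "i \<ge> 2"
    and "convex_cycle V E v (2 * i)"
    and "E a b"
    and "Theta V E a b (v 0) (v 1)"
  shows "(a \<in> (\<Inter>j\<in>{2..i}. W V E (v j) (v (j - 1))) \<and> b \<in> (\<Inter>j\<in>{2..i}. W V E (v j) (v (j - 1))))
       \<or> (a \<in> (\<Inter>j\<in>{2..i}. V - W V E (v j) (v (j - 1))) \<and> b \<in> (\<Inter>j\<in>{2..i}. V - W V E (v j) (v (j - 1))))"
proof -
  have mg: "simple_graph V E \<and> connected_graph V E \<and>
     (\<exists>P. \<Union>P = edges E \<and> {} \<notin> P \<and> (\<forall>F1\<in>P. \<forall>F2\<in>P. F1 \<noteq> F2 \<longrightarrow> F1 \<inter> F2 = {}) \<and>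
       (\<forall>F\<in>P. \<exists>\<alpha>. automorphism V E \<alpha> \<and>
          (\<forall>u v. E u v \<and> {u, v} \<in> F \<longrightarrow> \<alpha> u = v \<and> \<alpha> v = u) \<and>
          (\<exists>A B. components V (delete_edges E F) = {A, B} \<and> A \<noteq> B \<and>
             \<alpha> ` A = B \<and> \<alpha> ` B = A \<and>
             (\<forall>u\<in>A. \<forall>w\<in>A. delete_edges E F u w \<longleftrightarrow> delete_edges E F (\<alpha> u) (\<alpha> w)) \<and>
             (\<forall>u\<in>B. \<forall>w\<in>B. delete_edges E F u w \<longleftrightarrow> delete_edges E F (\<alpha> u) (\<alpha> w)))))"
    using assms(1) by (simp only: mirror_graph_def)
  have sg: "simple_graph V E" "connected_graph V E" using mg by (rule conjunct1, rule conjunct1[OF conjunct2])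
  obtain P where PP: "\<Union>P = edges E \<and> {} \<notin> P \<and> (\<forall>F1\<in>P. \<forall>F2\<in>P. F1 \<noteq> F2 \<longrightarrow> F1 \<inter> F2 = {}) \<and>
       (\<forall>F\<in>P. \<exists>\<alpha>. automorphism V E \<alpha> \<and>
          (\<forall>u v. E u v \<and> {u, v} \<in> F \<longrightarrow> \<alpha> u = v \<and> \<alpha> v = u) \<and>
          (\<exists>A B. components V (delete_edges E F) = {A, B} \<and> A \<noteq> B \<and>
             \<alpha> ` A = B \<and> \<alpha> ` B = A \<and>
             (\<forall>u\<in>A. \<forall>w\<in>A. delete_edges E F u w \<longleftrightarrow> delete_edges E F (\<alpha> u) (\<alpha> w)) \<and>
             (\<forall>u\<in>B. \<forall>w\<in>B. delete_edges E F u w \<longleftrightarrow> delete_edges E F (\<alpha> u) (\<alpha> w))))"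
    using conjunct2[OF conjunct2[OF mg]] by (rule exE)
  have P1: "\<Union>P = edges E" using PP by (rule conjunct1)
  have P2: "\<forall>F1\<in>P. \<forall>F2\<in>P. F1 \<noteq> F2 \<longrightarrow> F1 \<inter> F2 = {}" using PP by (elim conjE)
  have P3: "\<forall>F\<in>P. \<exists>\<alpha>. automorphism V E \<alpha> \<and>
          (\<forall>u v. E u v \<and> {u, v} \<in> F \<longrightarrow> \<alpha> u = v \<and> \<alpha> v = u) \<and>
          (\<exists>A B. components V (delete_edges E F) = {A, B} \<and> A \<noteq> B \<and> \<alpha> ` A = B \<and> \<alpha> ` B = A)"
    by (rule weaken) (use PP in \<open>elim conjE\<close>)
  note P = P1 P2 P3
  interpret mctx V E v i P
    by (rule mctx.intro[OF sgraph.intro[OF sg]], rule mctx_axioms.intro[OF assms(2,3) P])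
  have e0: "E (v 0) (v 1)" using cyc_edge[of 0] assms(2) by simp
  obtain F0 where F0: "F0 \<in> P" "{v 0, v 1} \<in> F0" using class_ex[OF e0] by blast
  obtain Fab where Fab: "Fab \<in> P" "{a, b} \<in> Fab" using class_ex[OF assms(4)] by blast
  have "Fab = F0" using theta_class[OF assms(4) e0 F0(1) Fab(1) Fab(2) F0(2) assms(5)] .
  then have abF: "{a, b} \<in> F0" using Fab(2) by simp
  have v1V: "v 1 \<in> V" using vV[of 1] assms(2) by simp
  obtain \<alpha> A B where m: "mcut V E F0 \<alpha> A B" "v 1 \<in> A" using cut_or[OF F0(1) v1V] by blast
  have e0': "E (v 1) (v 0)" using E_sym[OF e0] .
  have F0': "{v 1, v 0} \<in> F0" using F0(2) by (simp add: insert_commute)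
  have WA: "W V E (v 1) (v 0) = A" using mcut.W_eq[OF m(1) e0' F0' m(2)] .
  have aV: "a \<in> V" and bV: "b \<in> V" using E_V assms(4) by auto
  have sides: "(a \<notin> W V E (v 1) (v 0) \<and> b \<in> W V E (v 1) (v 0)) \<or> (a \<in> W V E (v 1) (v 0) \<and> b \<notin> W V E (v 1) (v 0))"
  proof (cases "a \<in> A")
    case True
    then have "b \<in> B" using mcut.edge_F[OF m(1) assms(4) abF] by blast
    then have "b \<notin> A" using mcut.disj[OF m(1)] by blast
    then show ?thesis unfolding WA using True by blast
  next
    case False
    then have "a \<in> B" using mcut.cover[OF m(1) aV] by blast
    then have "b \<in> A" using mcut.edge_F_B[OF m(1) assms(4) abF] by blast
    then show ?thesis unfolding WA using False by blast
  qed
  have res: "(\<forall>j\<in>{2..i}. a \<in> W V E (v j) (v (j-1)) \<and> b \<in> W V E (v j) (v (j-1))) \<or>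
         (\<forall>j\<in>{2..i}. a \<notin> W V E (v j) (v (j-1)) \<and> b \<notin> W V E (v j) (v (j-1)))"
  proof (cases "a \<notin> W V E (v 1) (v 0) \<and> b \<in> W V E (v 1) (v 0)")
    case True
    then show ?thesis using core[OF assms(4) F0(1) abF F0(2)] by blast
  next
    case False
    then have s: "b \<notin> W V E (v 1) (v 0)" "a \<in> W V E (v 1) (v 0)" using sides by blast+
    have eba: "E b a" using E_sym[OF assms(4)] .
    have baF: "{b, a} \<in> F0" using abF by (simp add: insert_commute)
    have "(\<forall>j\<in>{2..i}. b \<in> W V E (v j) (v (j-1)) \<and> a \<in> W V E (v j) (v (j-1))) \<or>
         (\<forall>j\<in>{2..i}. b \<notin> W V E (v j) (v (j-1)) \<and> a \<notin> W V E (v j) (v (j-1)))"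
      using core[OF eba F0(1) baF F0(2) s] .
    then show ?thesis by blast
  qed
  then show ?thesis using aV bV by blast
qed



end
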